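(* Let $k\in\mathbb{Z}$ and $\imath,q\in\mathbb{Z}_{>1}$. The rational polygon $\mathrm{conv}((0,0),(k,\imath),(k+1/q,\imath))$ is canonical if and only if there is an integer $c$ with $0<c<q$ and $kc\equiv-1\bmod \imath$.
   Context: For rationals $a<b$ and $\imath\in\mathbb{Z}_{>1}$, the polygon $\mathrm{conv}((0,0),(a,\imath),(b,\imath))$ is $\mathbb{Q}$-Gorenstein of index $\imath$ (with $\alpha=(0,1)$), and it is called canonical if every lattice point $p\neq(0,0)$ in it satisfies $p_2=\imath$, i.e. it contains no lattice point $p$ with $0<p_2<\imath$. *)

theory Defs
  imports "HOL-Analysis.Analysis" "HOL-Number_Theory.Cong"
begin

definition tri_polygon :: "rat \<Rightarrow> rat \<Rightarrow> int \<Rightarrow> (real \<times> real) set" where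
  "tri_polygon a b i = convex hull {(0, 0), (of_rat a, of_int i), (of_rat b, of_int i)}"

definition canonical_tri :: "rat \<Rightarrow> rat \<Rightarrow> int \<Rightarrow> bool" where
  "canonical_tri a b i \<longleftrightarrow>
     (\<forall>x y :: int. (real_of_int x, real_of_int y) \<in> tri_polygon a b i \<and> (x, y) \<noteq> (0, 0) \<longrightarrow> y = i)"

end

theory Submission
  imports Defs
begin
lemma hull_mem:
  fixes a b I X Y :: real
  assumes I: "I>0" and ab: "a<b"
  shows "(X,Y) \<in> convex hull {(0,0),(a,I),(b,I)} \<longleftrightarrow> 0\<le>Y \<and> Y\<le>I \<and> a*Y \<le> X*I \<and> X*I \<le> b*Y"
proof
  assume "(X,Y) \<in> convex hull {(0,0),(a,I),(b,I)}"
  then obtain u v w where uvw: "0\<le>u" "0\<le>v" "0\<le>w" "u+v+w=1"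
    and e: "(X,Y) = u *\<^sub>R (0,0) + v *\<^sub>R (a,I) + w *\<^sub>R (b,I)"
    unfolding convex_hull_3 by blast
  have X: "X = v * a + w * b" and Y: "Y = (v+w)*I" using e by (auto simp: algebra_simps)
  have "a*Y \<le> X*I" unfolding X Y using uvw ab I
    by (simp add: algebra_simps mult_right_mono)
  moreover have "X*I \<le> b*Y" unfolding X Y using uvw ab I
    by (simp add: algebra_simps mult_right_mono mult_left_mono)
  moreover have "0\<le>Y" "Y\<le>I" unfolding Y using uvw I by (auto intro: mult_nonneg_nonneg)
  ultimately show "0\<le>Y \<and> Y\<le>I \<and> a*Y \<le> X*I \<and> X*I \<le> b*Y" by auto
next
  assume h: "0\<le>Y \<and> Y\<le>I \<and> a*Y \<le> X*I \<and> X*I \<le> b*Y"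
  define t where "t = Y/I"
  define w where "w = (X - a*t)/(b-a)"
  define v where "v = t - w"
  define u where "u = 1 - t"
  have t01: "0 \<le> t" "t \<le> 1" using h I by (auto simp: t_def)
  have "a*t \<le> X" using h I by (simp add: t_def field_simps)
  hence w0: "0\<le>w" using ab by (simp add: w_def)
  have "X \<le> b*t" using h I by (simp add: t_def field_simps)
  hence "w \<le> t" using ab by (simp add: w_def field_simps)
  hence v0: "0\<le>v" by (simp add: v_def)
  have "w*(b-a) = X - a*t" using ab by (simp add: w_def)
  hence X: "X = v * a + w * b" by (simp add: v_def algebra_simps)
  have Y: "Y = v * I + w * I" using I by (simp add: v_def t_def field_simps)
  show "(X,Y) \<in> convex hull {(0,0),(a,I),(b,I)}"
    unfolding convex_hull_3
    apply (rule CollectI)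
    apply (rule exI[of _ u], rule exI[of _ v], rule exI[of _ w])
    using t01 w0 v0 X Y by (auto simp: u_def v_def)
qed

lemma tri_int:
  fixes k i q x y :: int
  assumes "i > 1" and "q > 1"
  shows "(real_of_int x, real_of_int y) \<in> tri_polygon (of_int k) (of_int k + 1 / of_int q) i
     \<longleftrightarrow> 0 \<le> y \<and> y \<le> i \<and> 0 \<le> x*i - k*y \<and> q*(x*i - k*y) \<le> y"
proof -
  have q: "real_of_int q > 0" using assms by simp
  have r: "of_rat (of_int k + 1 / of_int q) = real_of_int k + 1 / real_of_int q"
    by (simp add: of_rat_add of_rat_divide)
  have "(real_of_int x, real_of_int y) \<in> tri_polygon (of_int k) (of_int k + 1 / of_int q) i
     \<longleftrightarrow> 0 \<le> real_of_int y \<and> real_of_int y \<le> real_of_int i \<and>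
        real_of_int k * real_of_int y \<le> real_of_int x * real_of_int i \<and>
        real_of_int x * real_of_int i \<le> (real_of_int k + 1 / real_of_int q) * real_of_int y"
    unfolding tri_polygon_def r using assms
    by (subst hull_mem) auto
  also have "(real_of_int x * real_of_int i \<le> (real_of_int k + 1 / real_of_int q) * real_of_int y)
      \<longleftrightarrow> real_of_int q * (real_of_int x * real_of_int i - real_of_int k * real_of_int y) \<le> real_of_int y"
    using q by (simp add: field_simps)
  also have "\<dots> \<longleftrightarrow> q*(x*i - k*y) \<le> y"
    by (metis of_int_le_iff of_int_mult of_int_diff)
  finally show ?thesis
    by (metis of_int_le_iff of_int_mult of_int_0_le_iff diff_ge_0_iff_ge)
qed

theorem mainTheorem7:
  fixes k i q :: int
  assumes "i > 1" and "q > 1"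
  shows "canonical_tri (of_int k) (of_int k + 1 / of_int q) i \<longleftrightarrow>
         (\<exists>c :: int. 0 < c \<and> c < q \<and> [k * c = -1] (mod i))"
proof
  assume can: "canonical_tri (of_int k) (of_int k + 1 / of_int q) i"
  have can': "y = i" if "0 \<le> y" "y \<le> i" "0 \<le> x*i - k*y" "q*(x*i - k*y) \<le> y" "(x,y) \<noteq> (0,0)" for x y
    using can that tri_int[OF assms, of x y k] unfolding canonical_tri_def by blast
  show "\<exists>c. 0 < c \<and> c < q \<and> [k * c = -1] (mod i)"
  proof (cases "coprime k i")
    case False
    define g where "g = gcd k i"
    have g1: "g > 1" using False assms unfolding g_def
      by (metis gcd_ge_0_int gcd_eq_0_iff coprime_iff_gcd_eq_1 le_less not_less zless_imp_add1_zle
          add_0 linorder_neqE_linordered_idom order.asym)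
    obtain a where a: "i = g*a" unfolding g_def by (meson gcd_dvd2 dvdE)
    obtain b where b: "k = g*b" unfolding g_def by (meson gcd_dvd1 dvdE)
    have a0: "a > 0" using a g1 assms by (smt (verit) mult_nonneg_nonpos)
    have ai: "a < i" using a g1 a0 by (smt (verit) mult_less_cancel_right1)
    have "b*i - k*a = 0" using a b by simp
    hence "a = i" using can'[of a b] a0 ai by simp
    thus ?thesis using ai by simp
  next
    case True
    obtain u where u: "[k * u = 1] (mod i)" using cong_solve_int[of k i] True
      by (auto simp: coprime_iff_gcd_eq_1)
    define c where "c = (-u) mod i"
    have "[c = -u] (mod i)" unfolding c_def cong_def by simp
    hence "[k*c = k*(-u)] (mod i)" by (rule cong_scalar_left)
    moreover have "[k*(-u) = -1] (mod i)" using u by (simp add: cong_minus_minus_iff)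
    ultimately have kc: "[k*c = -1] (mod i)" by (rule cong_trans)
    have c0: "0 \<le> c" "c < i" using assms unfolding c_def by auto
    have "c \<noteq> 0"
    proof
      assume "c = 0"
      with kc have "i dvd 1" by (simp add: cong_iff_dvd_diff)
      thus False using assms by auto
    qed
    hence cpos: "0 < c" using c0 by simp
    show ?thesis
    proof (cases "c < q")
      case True then show ?thesis using cpos kc by blast
    next
      case False
      have "i dvd (k*c + 1)" using kc by (simp add: cong_iff_dvd_diff)
      then obtain x where x: "k*c + 1 = i*x" by (meson dvdE)
      have "x*i - k*c = 1" using x by (simp add: algebra_simps)
      hence "c = i" using can'[of c x] c0 False cpos by simp
      thus ?thesis using c0 by simp
    qed
  qed
next
  assume "\<exists>c. 0 < c \<and> c < q \<and> [k * c = -1] (mod i)"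
  then obtain c where c: "0 < c" "c < q" "[k * c = -1] (mod i)" by blast
  have dk: "i dvd (k*c + 1)" using c(3) by (simp add: cong_iff_dvd_diff)
  show "canonical_tri (of_int k) (of_int k + 1 / of_int q) i"
    unfolding canonical_tri_def
  proof (intro allI impI)
    fix x y :: int
    assume h: "(real_of_int x, real_of_int y) \<in> tri_polygon (of_int k) (of_int k + 1 / of_int q) i \<and> (x, y) \<noteq> (0, 0)"
    define r where "r = x*i - k*y"
    have hh: "0 \<le> y" "y \<le> i" "0 \<le> r" "q*r \<le> y" "(x,y) \<noteq> (0,0)"
      using h tri_int[OF assms, of x y k] unfolding r_def by auto
    show "y = i"
    proof (rule ccontr)
      assume "y \<noteq> i"
      hence yi: "y < i" using hh by simp
      have "y - r*c = y*(k*c+1) - x*i*c" unfolding r_def by (simp add: algebra_simps)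
      hence "i dvd (y - r*c)" using dk by simp
      hence "y mod i = (r*c) mod i" by (simp add: mod_eq_dvd_iff)
      hence ym: "y = (r*c) mod i" using hh yi by simp
      show False
      proof (cases "r = 0")
        case True
        hence "y = 0" using ym by simp
        hence "x*i = 0" using True r_def by simp
        hence "x = 0" using assms by simp
        thus False using hh \<open>y = 0\<close> by simp
      next
        case False
        hence rp: "r > 0" using hh by simp
        have "(r*c) mod i \<le> r*c" using rp c assms by (simp add: zmod_le_nonneg_dividend)
        moreover have "r*c < q*r" using rp c by simp
        ultimately show False using ym hh by simp
      qed
    qed
  qed
qed
end
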